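(* Let $\mathscr X=[0,1]^2$ with the Euclidean norm $\|\cdot\|_2$. Let $\mathbf x_1=(1/2,1/2)$ and, for $n\ge1$, let $\mathbf x_{n+1}$ be any point of $\mathrm{Arg}\max_{\mathbf x\in\mathscr X}\min_{1\le i\le n}\|\mathbf x-\mathbf x_i\|_2$, with $\mathbf X_n=\{\mathbf x_1,\ldots,\mathbf x_n\}$. For $n\ge5$ let $m=m(n)=\lfloor\log_2(\sqrt{n/2-1/4}-1/2)\rfloor$, and set $\gamma_m=2^{-m}$, $n_m=(2^m+1)^2+4^m$, $k_m=(2^{m+1}+1)^2$. Then: - for $n=n_m$: $\mathsf{SR}(\mathbf X_n)=\gamma_m\sqrt2/4$, $\mathsf{CR}(\mathbf X_n)=\gamma_m/2$, $\mathsf{MR}(\mathbf X_n)=\sqrt2$; - for $n=n_m+1,\ldots,k_m-1$: $\mathsf{SR}(\mathbf X_n)=\gamma_m/4$, $\mathsf{CR}(\mathbf X_n)=\gamma_m/2$, $\mathsf{MR}(\mathbf X_n)=2$; - for $n=k_m$: $\mathsf{SR}(\mathbf X_n)=\gamma_m/4$, $\mathsf{CR}(\mathbf X_n)=\gamma_m\sqrt2/4$, $\mathsf{MR}(\mathbf X_n)=\sqrt2$; - for $n=k_m+1,\ldots,n_{m+1}-1$: $\mathsf{SR}(\mathbf X_n)=\gamma_m\sqrt2/8$, $\mathsf{CR}(\mathbf X_n)=\gamma_m\sqrt2/4$, $\mathsf{MR}(\mathbf X_n)=2$.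
   Context: Fill distance $\mathsf{CR}(\mathbf X_n)=\sup_{\mathbf x\in\mathscr X}\min_{i\le n}\|\mathbf x-\mathbf x_i\|_2$; separation radius $\mathsf{SR}(\mathbf X_n)=\tfrac12\min_{i\ne j\le n}\|\mathbf x_i-\mathbf x_j\|_2$; mesh-ratio $\mathsf{MR}(\mathbf X_n)=\mathsf{CR}(\mathbf X_n)/\mathsf{SR}(\mathbf X_n)$. The integer $m(n)$ is the unique integer with $n_m\le n<n_{m+1}$. *)

theory Defs
  imports "HOL-Analysis.Analysis"
begin

text \<open>The design space [0,1]^2, points as pairs of reals (norm on real \<times> real is Euclidean).\<close>
definition unit_square :: "(real \<times> real) set" where
  "unit_square = {0..1} \<times> {0..1}"

definition CR :: "(real \<times> real) set \<Rightarrow> (real \<times> real) set \<Rightarrow> real" where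
  "CR D X = (SUP y\<in>D. Min ((\<lambda>p. dist y p) ` X))"

definition SR :: "(real \<times> real) set \<Rightarrow> real" where
  "SR X = Min {dist p q | p q. p \<in> X \<and> q \<in> X \<and> p \<noteq> q} / 2"

definition MR :: "(real \<times> real) set \<Rightarrow> (real \<times> real) set \<Rightarrow> real" where
  "MR D X = CR D X / SR X"

definition greedy_packing :: "(real \<times> real) set \<Rightarrow> (nat \<Rightarrow> real \<times> real) \<Rightarrow> bool" where
  "greedy_packing D x \<longleftrightarrow>
     (\<forall>n\<ge>1. x (Suc n) \<in> D \<and>
        (\<forall>y\<in>D. Min ((\<lambda>i. dist y (x i)) ` {1..n}) \<le> Min ((\<lambda>i. dist (x (Suc n)) (x i)) ` {1..n})))"

definition n_seq :: "nat \<Rightarrow> nat" where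
  "n_seq m = (2^m + 1)^2 + 4^m"

definition k_seq :: "nat \<Rightarrow> nat" where
  "k_seq m = (2^(m+1) + 1)^2"

end

theory Submission
  imports Defs
begin
definition md :: "real \<times> real \<Rightarrow> (real \<times> real) set \<Rightarrow> real" where
  "md y S = Min ((\<lambda>p. dist y p) ` S)"

lemma md_le: "finite S \<Longrightarrow> p \<in> S \<Longrightarrow> md y S \<le> dist y p"
  unfolding md_def by (intro Min_le) auto

lemma md_ge: "finite S \<Longrightarrow> S \<noteq> {} \<Longrightarrow> (\<And>p. p \<in> S \<Longrightarrow> c \<le> dist y p) \<Longrightarrow> c \<le> md y S"
  unfolding md_def by (subst Min_ge_iff) auto

lemma md_mono: "finite T \<Longrightarrow> S \<noteq> {} \<Longrightarrow> S \<subseteq> T \<Longrightarrow> md y T \<le> md y S"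
  unfolding md_def by (intro Min_antimono) auto

lemma md_ex: "finite S \<Longrightarrow> S \<noteq> {} \<Longrightarrow> \<exists>p\<in>S. md y S = dist y p"
proof -
  assume a: "finite S" "S \<noteq> {}"
  have "Min ((\<lambda>p. dist y p) ` S) \<in> (\<lambda>p. dist y p) ` S" using a by (intro Min_in) auto
  then show ?thesis unfolding md_def by auto
qed

lemma md_img: "Min ((\<lambda>i. dist y (x i)) ` I) = md y (x ` I)"
  unfolding md_def by (simp add: image_image)

lemma step_lemma:
  assumes g: "greedy_packing D x" and fB: "finite B" and AB: "A \<subseteq> B" and BD: "B \<subseteq> D"
    and r: "r > 0"
    and cov: "\<And>y. y \<in> D \<Longrightarrow> \<exists>p\<in>A. dist y p \<le> r \<and> (dist y p < r \<or> y \<in> B)"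
    and sep: "\<And>p q. p \<in> B - A \<Longrightarrow> q \<in> B \<Longrightarrow> q \<noteq> p \<Longrightarrow> r \<le> dist p q"
    and X0: "x ` {1..n0} = A" and cA: "card A = n0" and n01: "n0 \<ge> 1"
  shows "n0 \<le> n \<Longrightarrow> n \<le> card B \<Longrightarrow> A \<subseteq> x ` {1..n} \<and> x ` {1..n} \<subseteq> B \<and> card (x ` {1..n}) = n"
proof (induction n rule: dec_induct)
  case base
  then show ?case using X0 cA AB by auto
next
  case (step n)
  let ?X = "x ` {1..n}"
  have IH: "A \<subseteq> ?X" "?X \<subseteq> B" "card ?X = n" using step by auto
  have fX: "finite ?X" by auto
  have n1: "n \<ge> 1" using step n01 by auto
  have Xne: "?X \<noteq> {}" using n1 by auto
  have Ane: "A \<noteq> {}" using cA n01 by auto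
  have "card ?X < card B" using IH step by auto
  then obtain p where p: "p \<in> B" "p \<notin> ?X"
  proof -
    have "?X \<noteq> B" using IH step by auto
    then show ?thesis using IH(2) that by blast
  qed
  have pA: "p \<in> B - A" using p IH by auto
  have "r \<le> md p ?X"
  proof (rule md_ge[OF fX Xne])
    fix q assume "q \<in> ?X"
    then show "r \<le> dist p q" using sep[OF pA, of q] p IH by auto
  qed
  also have "md p ?X \<le> md (x (Suc n)) ?X"
    using g n1 p BD unfolding greedy_packing_def md_img by auto
  finally have rx: "r \<le> md (x (Suc n)) ?X" .
  have xD: "x (Suc n) \<in> D" using g n1 unfolding greedy_packing_def by auto
  have "md (x (Suc n)) ?X \<le> md (x (Suc n)) A" by (rule md_mono[OF fX Ane IH(1)])
  then have rA: "\<And>q. q \<in> A \<Longrightarrow> r \<le> dist (x (Suc n)) q"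
    using rx md_le[OF finite_subset[OF AB fB], of _ "x (Suc n)"] by (meson order_trans)
  have xB: "x (Suc n) \<in> B" using cov[OF xD] rA by force
  have xX: "x (Suc n) \<notin> ?X" using md_le[OF fX, of "x (Suc n)" "x (Suc n)"] rx r by auto
  have eq: "x ` {1..Suc n} = insert (x (Suc n)) ?X"
    by (auto simp: atLeastAtMostSuc_conv)
  show ?case using IH xB xX eq fX by auto
qed

lemma step_full:
  assumes g: "greedy_packing D x" and fB: "finite B" and AB: "A \<subseteq> B" and BD: "B \<subseteq> D"
    and r: "r > 0"
    and cov: "\<And>y. y \<in> D \<Longrightarrow> \<exists>p\<in>A. dist y p \<le> r \<and> (dist y p < r \<or> y \<in> B)"
    and sep: "\<And>p q. p \<in> B - A \<Longrightarrow> q \<in> B \<Longrightarrow> q \<noteq> p \<Longrightarrow> r \<le> dist p q"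
    and X0: "x ` {1..card A} = A" and n01: "card A \<ge> 1"
  shows "x ` {1..card B} = B"
proof -
  have "card A \<le> card B" using AB fB by (simp add: card_mono)
  then have "x ` {1..card B} \<subseteq> B \<and> card (x ` {1..card B}) = card B"
    using step_lemma[OF g fB AB BD r cov sep X0 refl n01, of "card B"] by auto
  then show ?thesis using fB by (simp add: card_subset_eq)
qed

lemma CR_eq:
  assumes fB: "finite B" and AX: "A \<subseteq> X" and XB: "X \<subseteq> B" and BD: "B \<subseteq> D" and XnB: "X \<noteq> B"
    and Ane: "A \<noteq> {}"
    and cov: "\<And>y. y \<in> D \<Longrightarrow> \<exists>p\<in>A. dist y p \<le> r"
    and sep: "\<And>p q. p \<in> B - A \<Longrightarrow> q \<in> B \<Longrightarrow> q \<noteq> p \<Longrightarrow> r \<le> dist p q"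
  shows "CR D X = r"
proof -
  have fX: "finite X" using fB XB finite_subset by auto
  have Xne: "X \<noteq> {}" using AX Ane by auto
  have up: "md y X \<le> r" if "y \<in> D" for y
    using cov[OF that] md_le[OF fX] AX by (meson order_trans subsetD)
  obtain p where p: "p \<in> B" "p \<notin> X" using XB XnB by blast
  have pD: "p \<in> D" using p BD by auto
  have lo: "r \<le> md p X"
  proof (rule md_ge[OF fX Xne])
    fix q assume "q \<in> X"
    then show "r \<le> dist p q" using sep[of p q] p AX XB by auto
  qed
  have "CR D X = (SUP y\<in>D. md y X)" unfolding CR_def md_def ..
  also have "\<dots> = r"
  proof (rule antisym)
    show "(SUP y\<in>D. md y X) \<le> r" using pD up by (intro cSUP_least) auto
    have "bdd_above ((\<lambda>y. md y X) ` D)" using up by (intro bdd_aboveI2) auto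
    then have "md p X \<le> (SUP y\<in>D. md y X)" using pD by (intro cSUP_upper) auto
    then show "r \<le> (SUP y\<in>D. md y X)" using lo by auto
  qed
  finally show ?thesis .
qed

lemma SR_eq:
  assumes fX: "finite X" and sep: "\<And>p q. p \<in> X \<Longrightarrow> q \<in> X \<Longrightarrow> p \<noteq> q \<Longrightarrow> d \<le> dist p q"
    and p0: "p0 \<in> X" "q0 \<in> X" "p0 \<noteq> q0" "dist p0 q0 = d"
  shows "SR X = d / 2"
proof -
  let ?S = "{dist p q | p q. p \<in> X \<and> q \<in> X \<and> p \<noteq> q}"
  have "?S \<subseteq> (\<lambda>(p,q). dist p q) ` (X \<times> X)" by auto
  then have fS: "finite ?S" using fX finite_subset by blast
  have "Min ?S = d"
  proof (rule Min_eqI[OF fS])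
    show "d \<in> ?S" using p0 by blast
  qed (use sep in blast)
  then show ?thesis unfolding SR_def by simp
qed

definition gp :: "real \<Rightarrow> int \<Rightarrow> int \<Rightarrow> real \<times> real" where
  "gp s a b = (of_int a / s, of_int b / s)"

definition FF :: "nat \<Rightarrow> (real \<times> real) set" where
  "FF K = (\<lambda>(a,b). gp (real K) a b) ` ({0..int K} \<times> {0..int K})"

definition CC :: "nat \<Rightarrow> (real \<times> real) set" where
  "CC K = (\<lambda>(a,b). gp (2 * real K) (2 * a+1) (2 * b+1)) ` ({0..<int K} \<times> {0..<int K})"

definition EE :: "nat \<Rightarrow> (real \<times> real) set" where
  "EE K = FF K \<union> CC K"

lemma dist_gp: "s > 0 \<Longrightarrow> dist (gp s a b) (gp s c d) = sqrt (of_int ((a-c)^2+(b-d)^2)) / s"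
proof -
  assume s: "s > 0"
  have "dist (gp s a b) (gp s c d) = sqrt ((of_int a / s - of_int c / s)^2 + (of_int b / s - of_int d / s)^2)"
    unfolding gp_def by (simp add: dist_Pair_Pair dist_real_def)
  also have "(of_int a / s - of_int c / s)^2 + (of_int b / s - of_int d / s)^2 = of_int ((a-c)^2+(b-d)^2) / s^2"
    using s by (simp add: field_simps power2_eq_square)
  also have "sqrt (of_int ((a-c)^2+(b-d)^2) / s^2) = sqrt (of_int ((a-c)^2+(b-d)^2)) / s"
    using s by (simp add: real_sqrt_divide)
  finally show ?thesis .
qed

lemma dist_gp_y: "s > 0 \<Longrightarrow> dist (u, v) (gp s a b) = sqrt ((s * u - of_int a)^2 + (s * v - of_int b)^2) / s"
proof -
  assume s: "s > 0"
  have "dist (u, v) (gp s a b) = sqrt ((u - of_int a / s)^2 + (v - of_int b / s)^2)"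
    unfolding gp_def by (simp add: dist_Pair_Pair dist_real_def)
  also have "(u - of_int a / s)^2 + (v - of_int b / s)^2 = ((s * u - of_int a)^2 + (s * v - of_int b)^2) / s^2"
    using s by (simp add: field_simps power2_eq_square)
  also have "sqrt (((s * u - of_int a)^2 + (s * v - of_int b)^2) / s^2) = sqrt ((s * u - of_int a)^2 + (s * v - of_int b)^2) / s"
    using s by (simp add: real_sqrt_divide)
  finally show ?thesis .
qed

lemma gp_double: "s \<noteq> 0 \<Longrightarrow> gp s a b = gp (2 * s) (2 * a) (2 * b)"
  unfolding gp_def by simp

lemma gp_inj: "s \<noteq> 0 \<Longrightarrow> gp s a b = gp s c d \<longleftrightarrow> a = c \<and> b = d"
  unfolding gp_def by (simp add: divide_cancel_right)

lemma FF_iff: "p \<in> FF K \<longleftrightarrow> (\<exists>a b. 0 \<le> a \<and> a \<le> int K \<and> 0 \<le> b \<and> b \<le> int K \<and> p = gp (real K) a b)"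
proof
  assume "p \<in> FF K"
  then obtain a b where "(a,b) \<in> {0..int K} \<times> {0..int K}" "p = gp (real K) a b"
    unfolding FF_def by auto
  then show "\<exists>a b. 0 \<le> a \<and> a \<le> int K \<and> 0 \<le> b \<and> b \<le> int K \<and> p = gp (real K) a b" by auto
next
  assume "\<exists>a b. 0 \<le> a \<and> a \<le> int K \<and> 0 \<le> b \<and> b \<le> int K \<and> p = gp (real K) a b"
  then obtain a b where "0 \<le> a \<and> a \<le> int K \<and> 0 \<le> b \<and> b \<le> int K \<and> p = gp (real K) a b" by blast
  then show "p \<in> FF K" unfolding FF_def by (intro image_eqI[of _ _ "(a,b)"]) auto
qed

lemma CC_iff: "p \<in> CC K \<longleftrightarrow> (\<exists>a b. 0 \<le> a \<and> a < int K \<and> 0 \<le> b \<and> b < int K \<and> p = gp (2 * real K) (2 * a+1) (2 * b+1))"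
proof
  assume "p \<in> CC K"
  then obtain a b where "(a,b) \<in> {0..<int K} \<times> {0..<int K}" "p = gp (2 * real K) (2 * a+1) (2 * b+1)"
    unfolding CC_def by auto
  then show "\<exists>a b. 0 \<le> a \<and> a < int K \<and> 0 \<le> b \<and> b < int K \<and> p = gp (2 * real K) (2 * a+1) (2 * b+1)" by auto
next
  assume "\<exists>a b. 0 \<le> a \<and> a < int K \<and> 0 \<le> b \<and> b < int K \<and> p = gp (2 * real K) (2 * a+1) (2 * b+1)"
  then obtain a b where "0 \<le> a \<and> a < int K \<and> 0 \<le> b \<and> b < int K \<and> p = gp (2 * real K) (2 * a+1) (2 * b+1)" by blast
  then show "p \<in> CC K" unfolding CC_def by (intro image_eqI[of _ _ "(a,b)"]) auto
qed

lemma FF2_iff: "p \<in> FF (2 * K) \<longleftrightarrow> (\<exists>a b. 0 \<le> a \<and> a \<le> 2 * int K \<and> 0 \<le> b \<and> b \<le> 2 * int K \<and> p = gp (2 * real K) a b)"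
  unfolding FF_iff by simp

lemma EE_iff: assumes K: "K > 0"
  shows "p \<in> EE K \<longleftrightarrow> (\<exists>a b. 0 \<le> a \<and> a \<le> 2 * int K \<and> 0 \<le> b \<and> b \<le> 2 * int K \<and> even (a+b) \<and> p = gp (2 * real K) a b)"
proof
  assume "p \<in> EE K"
  then consider "p \<in> FF K" | "p \<in> CC K" unfolding EE_def by auto
  then show "\<exists>a b. 0 \<le> a \<and> a \<le> 2 * int K \<and> 0 \<le> b \<and> b \<le> 2 * int K \<and> even (a+b) \<and> p = gp (2 * real K) a b"
  proof cases
    case 1
    then obtain a b where ab: "0 \<le> a" "a \<le> int K" "0 \<le> b" "b \<le> int K" "p = gp (real K) a b"
      unfolding FF_iff by auto
    have "p = gp (2 * real K) (2 * a) (2 * b)" using ab(5) K gp_double[of "real K" a b] by simp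
    then show ?thesis using ab by (intro exI[of _ "2 * a"] exI[of _ "2 * b"]) auto
  next
    case 2
    then obtain a b where ab: "0 \<le> a" "a < int K" "0 \<le> b" "b < int K" "p = gp (2 * real K) (2 * a+1) (2 * b+1)"
      unfolding CC_iff by auto
    then show ?thesis by (intro exI[of _ "2 * a+1"] exI[of _ "2 * b+1"]) auto
  qed
next
  assume "\<exists>a b. 0 \<le> a \<and> a \<le> 2 * int K \<and> 0 \<le> b \<and> b \<le> 2 * int K \<and> even (a+b) \<and> p = gp (2 * real K) a b"
  then obtain a b where ab: "0 \<le> a" "a \<le> 2 * int K" "0 \<le> b" "b \<le> 2 * int K" "even (a+b)" "p = gp (2 * real K) a b"
    by auto
  show "p \<in> EE K"
  proof (cases "even a")
    case True
    then have eb: "even b" using ab(5) by simp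
    obtain a' where a'1: "a = 2 * a'" using True by (metis evenE)
    obtain b' where a'2: "b = 2 * b'" using eb by (metis evenE)
    note a' = a'1 a'2
    have "p = gp (real K) a' b'" using ab a' K gp_double[of "real K" a' b'] by simp
    then have "p \<in> FF K" unfolding FF_iff using ab a' by auto
    then show ?thesis unfolding EE_def by auto
  next
    case False
    then have eb: "odd b" using ab(5) by simp
    obtain a' where a'1: "a = 2 * a'+1" using False by (metis oddE)
    obtain b' where a'2: "b = 2 * b'+1" using eb by (metis oddE)
    note a' = a'1 a'2
    have "p \<in> CC K" unfolding CC_iff using ab a' by (intro exI[of _ a'] exI[of _ b']) auto
    then show ?thesis unfolding EE_def by auto
  qed
qed

lemma int_sq1: "(z::int) \<noteq> 0 \<Longrightarrow> 1 \<le> z^2"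
  by (smt (verit) power2_less_eq_zero_iff zero_less_power2 int_one_le_iff_zero_less power2_eq_square)

lemma int_sq4: "even (z::int) \<Longrightarrow> z \<noteq> 0 \<Longrightarrow> 4 \<le> z^2"
proof -
  assume "even z" "z \<noteq> 0"
  then obtain g where g: "z = 2 * g" "g \<noteq> 0" by (metis evenE mult_zero_right)
  have "1 \<le> g^2" using int_sq1 g by auto
  then show ?thesis using g by (simp add: power_mult_distrib)
qed

lemma pair1: "(a::int, b) \<noteq> (c, d) \<Longrightarrow> 1 \<le> (a-c)^2 + (b-d)^2"
proof -
  assume h: "(a, b) \<noteq> (c, d)"
  show ?thesis
  proof (cases "a = c")
    case True
    then have "b - d \<noteq> 0" using h by auto
    then show ?thesis using int_sq1[of "b-d"] True by simp
  next
    case False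
    then have "a - c \<noteq> 0" by auto
    then show ?thesis using int_sq1[of "a-c"] zero_le_power2[of "b-d"] by linarith
  qed
qed

lemma pair2: "even (a+b) \<Longrightarrow> even (c+d) \<Longrightarrow> (a::int, b) \<noteq> (c, d) \<Longrightarrow> 2 \<le> (a-c)^2 + (b-d)^2"
proof -
  assume e1: "even (a+b)" and e2: "even (c+d)" and h: "(a, b) \<noteq> (c, d)"
  have ev: "even ((a-c) + (b-d))" using e1 e2
  proof -
    have "(a-c)+(b-d) = (a+b) - (c+d)" by simp
    then show ?thesis using e1 e2 by simp
  qed
  show ?thesis
  proof (cases "a = c")
    case True
    then have "b - d \<noteq> 0" "even (b-d)" using h ev by auto
    then show ?thesis using int_sq4[of "b-d"] True by simp
  next
    case False
    show ?thesis
    proof (cases "b = d")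
      case True
      then have "a - c \<noteq> 0" "even (a-c)" using False ev by auto
      then show ?thesis using int_sq4[of "a-c"] True by simp
    next
      case F2: False
      then show ?thesis using int_sq1[of "a-c"] int_sq1[of "b-d"] False by simp
    qed
  qed
qed

lemma P1: assumes K: "K > 0" and p: "p \<in> FF K" and q: "q \<in> FF K" and pq: "p \<noteq> q"
  shows "1 / real K \<le> dist p q"
proof -
  obtain a b where ab: "p = gp (real K) a b" using p unfolding FF_iff by auto
  obtain c d where cd: "q = gp (real K) c d" using q unfolding FF_iff by auto
  have "(a,b) \<noteq> (c,d)" using pq ab cd by auto
  then have "1 \<le> (a-c)^2 + (b-d)^2" by (rule pair1)
  then have "real_of_int 1 \<le> real_of_int ((a-c)^2 + (b-d)^2)" by (simp only: of_int_le_iff)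
  then have "1 \<le> real_of_int ((a-c)^2 + (b-d)^2)" by (simp only: of_int_1)
  then have "1 \<le> sqrt (real_of_int ((a-c)^2 + (b-d)^2))" by simp
  then show ?thesis using K ab cd dist_gp[of "real K"] by (simp add: divide_right_mono)
qed

lemma P2: assumes K: "K > 0" and p: "p \<in> EE K" and q: "q \<in> EE K" and pq: "p \<noteq> q"
  shows "sqrt 2 / (2 * real K) \<le> dist p q"
proof -
  obtain a b where ab: "even (a+b)" "p = gp (2 * real K) a b" using p unfolding EE_iff[OF K] by auto
  obtain c d where cd: "even (c+d)" "q = gp (2 * real K) c d" using q unfolding EE_iff[OF K] by auto
  have "(a,b) \<noteq> (c,d)" using pq ab cd by auto
  then have "2 \<le> (a-c)^2 + (b-d)^2" using pair2[OF ab(1) cd(1)] by blast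
  then have "real_of_int 2 \<le> real_of_int ((a-c)^2 + (b-d)^2)" by (simp only: of_int_le_iff)
  then have "2 \<le> real_of_int ((a-c)^2 + (b-d)^2)" by (simp only: of_int_numeral)
  then have "sqrt 2 \<le> sqrt (real_of_int ((a-c)^2 + (b-d)^2))" by simp
  then show ?thesis using K ab cd dist_gp[of "2 * real K"] by (simp add: divide_right_mono)
qed

lemma coord01: "K > 0 \<Longrightarrow> 0 \<le> a \<Longrightarrow> a \<le> int K \<Longrightarrow> 0 \<le> real_of_int a / real K \<and> real_of_int a / real K \<le> 1"
proof -
  assume K: "K > 0" and a: "0 \<le> a" "a \<le> int K"
  have "real_of_int a \<le> real_of_int (int K)" using a by (simp only: of_int_le_iff)
  then have "real_of_int a \<le> real K" by simp
  then show ?thesis using K a by (simp add: divide_le_eq_1)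
qed

lemma FF_sub: assumes K: "K > 0" shows "FF K \<subseteq> unit_square"
proof
  fix p assume "p \<in> FF K"
  then obtain a b where ab: "0 \<le> a" "a \<le> int K" "0 \<le> b" "b \<le> int K" "p = gp (real K) a b"
    unfolding FF_iff by blast
  show "p \<in> unit_square" using coord01[OF K ab(1,2)] coord01[OF K ab(3,4)] ab(5)
    unfolding unit_square_def gp_def by auto
qed

lemma CC_sub: assumes K: "K > 0" shows "CC K \<subseteq> unit_square"
proof
  fix p assume "p \<in> CC K"
  then obtain a b where ab: "0 \<le> a" "a < int K" "0 \<le> b" "b < int K" "p = gp (2 * real K) (2 * a+1) (2 * b+1)"
    unfolding CC_iff by blast
  have K2: "2 * K > 0" using K by simp
  have "0 \<le> 2 * a + 1" "2 * a + 1 \<le> int (2 * K)" "0 \<le> 2 * b + 1" "2 * b + 1 \<le> int (2 * K)" using ab by auto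
  from coord01[OF K2 this(1,2)] coord01[OF K2 this(3,4)]
  show "p \<in> unit_square" using ab(5)
    unfolding unit_square_def gp_def by auto
qed

lemma EE_sub: "K > 0 \<Longrightarrow> EE K \<subseteq> unit_square"
  unfolding EE_def using FF_sub CC_sub by auto

lemma EE_FF2: assumes K: "K > 0" shows "EE K \<subseteq> FF (2 * K)"
proof
  fix p assume "p \<in> EE K"
  then obtain a b where "0 \<le> a \<and> a \<le> 2 * int K \<and> 0 \<le> b \<and> b \<le> 2 * int K \<and> p = gp (2 * real K) a b"
    unfolding EE_iff[OF K] by blast
  then show "p \<in> FF (2 * K)" unfolding FF2_iff by blast
qed

lemma FF_EE: "FF K \<subseteq> EE K" unfolding EE_def by auto

lemma finite_FF: "finite (FF K)" unfolding FF_def by auto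
lemma finite_CC: "finite (CC K)" unfolding CC_def by auto
lemma finite_EE: "finite (EE K)" unfolding EE_def using finite_FF finite_CC by auto

lemma card_FF: assumes K: "K > 0" shows "card (FF K) = (K+1)^2"
proof -
  have "inj_on (\<lambda>(a,b). gp (real K) a b) ({0..int K} \<times> {0..int K})"
    using K by (auto simp: inj_on_def gp_inj)
  then have "card (FF K) = card ({0..int K} \<times> {0..int K})" unfolding FF_def by (rule card_image)
  also have "\<dots> = (K+1)^2"
  proof -
    have "card {0..int K} = K + 1" by simp
    then show ?thesis by (simp add: card_cartesian_product power2_eq_square)
  qed
  finally show ?thesis .
qed

lemma card_CC: assumes K: "K > 0" shows "card (CC K) = K^2"
proof -
  have "inj_on (\<lambda>(a,b). gp (2 * real K) (2 * a+1) (2 * b+1)) ({0..<int K} \<times> {0..<int K})"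
    using K by (auto simp: inj_on_def gp_inj)
  then have "card (CC K) = card ({0..<int K} \<times> {0..<int K})" unfolding CC_def by (rule card_image)
  also have "\<dots> = K^2" by (simp add: card_cartesian_product power2_eq_square)
  finally show ?thesis .
qed

lemma FF_CC_disj: assumes K: "K > 0" shows "FF K \<inter> CC K = {}"
proof -
  have False if h1: "p \<in> FF K" and h2: "p \<in> CC K" for p
  proof -
    obtain a b where ab: "p = gp (real K) a b" using h1 unfolding FF_iff by blast
    obtain c d where cd: "p = gp (2 * real K) (2 * c+1) (2 * d+1)" using h2 unfolding CC_iff by blast
    have "gp (2 * real K) (2 * a) (2 * b) = gp (2 * real K) (2 * c+1) (2 * d+1)"
      using ab cd gp_double[of "real K" a b] K by simp
    then have "2 * a = 2 * c + 1" using K gp_inj by auto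
    then show False by presburger
  qed
  then show ?thesis by auto
qed

lemma card_EE: assumes K: "K > 0" shows "card (EE K) = (K+1)^2 + K^2"
  unfolding EE_def using card_Un_disjoint[OF finite_FF finite_CC FF_CC_disj[OF K]] card_FF[OF K] card_CC[OF K]
  by simp

lemma W1: assumes K: "K > 0" and p: "p \<in> CC K"
  shows "\<exists>q\<in>FF K. dist p q = sqrt 2 / (2 * real K)"
proof -
  obtain a b where ab: "0 \<le> a" "a < int K" "0 \<le> b" "b < int K" "p = gp (2 * real K) (2 * a+1) (2 * b+1)"
    using p unfolding CC_iff by auto
  have q: "gp (real K) a b \<in> FF K" unfolding FF_iff using ab by (intro exI[of _ a] exI[of _ b]) auto
  have "dist p (gp (real K) a b) = dist (gp (2 * real K) (2 * a+1) (2 * b+1)) (gp (2 * real K) (2 * a) (2 * b))"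
    using ab gp_double[of "real K" a b] K by simp
  also have "\<dots> = sqrt 2 / (2 * real K)" using K dist_gp[of "2 * real K"] by simp
  finally show ?thesis using q by blast
qed

lemma W2: assumes K: "K > 0" and p: "p \<in> FF (2 * K)" and pn: "p \<notin> EE K"
  shows "\<exists>q\<in>EE K. dist p q = 1 / (2 * real K)"
proof -
  obtain a b where ab: "0 \<le> a" "a \<le> 2 * int K" "0 \<le> b" "b \<le> 2 * int K" "p = gp (2 * real K) a b"
    using p unfolding FF2_iff by auto
  have odd: "odd (a+b)" using pn ab unfolding EE_iff[OF K] by blast
  show ?thesis
  proof (cases "a < 2 * int K")
    case True
    have "gp (2 * real K) (a+1) b \<in> EE K" unfolding EE_iff[OF K] using ab True odd
      by (intro exI[of _ "a+1"] exI[of _ b]) auto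
    moreover have "dist p (gp (2 * real K) (a+1) b) = 1 / (2 * real K)"
      using ab K dist_gp[of "2 * real K"] by (simp add: power2_eq_square)
    ultimately show ?thesis by blast
  next
    case False
    have "gp (2 * real K) (a-1) b \<in> EE K" unfolding EE_iff[OF K] using ab False odd K
      by (intro exI[of _ "a-1"] exI[of _ b]) auto
    moreover have "dist p (gp (2 * real K) (a-1) b) = 1 / (2 * real K)"
      using ab K dist_gp[of "2 * real K"] by (simp add: power2_eq_square)
    ultimately show ?thesis by blast
  qed
qed

lemma sqrt_half: "sqrt 2 / 2 = sqrt (1/2)"
  by (simp add: real_sqrt_divide) (metis real_div_sqrt zero_le_numeral)

lemma round1: assumes K: "K > 0" and u: "0 \<le> u" "u \<le> 1"
  shows "\<exists>i. 0 \<le> i \<and> i \<le> int K \<and> (real K * u - of_int i)^2 \<le> 1/4 \<and>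
    ((real K * u - of_int i)^2 < 1/4 \<or> (\<exists>c. 0 \<le> c \<and> c < int K \<and> u = of_int (2 * c + 1) / (2 * real K)))"
proof -
  define i where "i = \<lfloor>real K * u + 1/2\<rfloor>"
  have f1: "of_int i \<le> real K * u + 1/2" unfolding i_def by (rule of_int_floor_le)
  have f2: "real K * u + 1/2 < of_int i + 1" unfolding i_def by (rule real_of_int_floor_add_one_gt)
  have Ku: "0 \<le> real K * u" "real K * u \<le> real K" using K u by (auto simp: mult_left_le)
  have i0: "0 \<le> i" unfolding i_def using Ku by simp
  have iK: "i \<le> int K" unfolding i_def using Ku by (simp add: floor_le_iff)
  define al where "al = real K * u - of_int i"
  have al: "-1/2 \<le> al" "al < 1/2" using f1 f2 unfolding al_def by auto
  have sq: "al^2 - 1/4 = (al - 1/2) * (al + 1/2)" by (simp add: algebra_simps power2_eq_square)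
  have "(al - 1/2) * (al + 1/2) \<le> 0" using al by (intro mult_nonpos_nonneg) auto
  then have le: "al^2 \<le> 1/4" using sq by linarith
  show ?thesis
  proof (cases "al = -1/2")
    case False
    then have "(al - 1/2) * (al + 1/2) < 0" using al by (intro mult_neg_pos) auto
    then have "al^2 < 1/4" using sq by linarith
    then show ?thesis using i0 iK le unfolding al_def by (intro exI[of _ i]) simp
  next
    case True
    have "real K * u = of_int i - 1/2" using True unfolding al_def by simp
    then have uu: "u = (2 * of_int i - 1) / (2 * real K)" using K by (simp add: field_simps)
    have "1/2 \<le> real_of_int i" using True Ku unfolding al_def by simp
    then have "0 < real_of_int i" by linarith
    then have i1: "1 \<le> i" by simp
    have c: "0 \<le> i - 1" "i - 1 < int K" using i1 iK by auto
    have "u = of_int (2 * (i - 1) + 1) / (2 * real K)" using uu by simp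
    then show ?thesis using i0 iK le c unfolding al_def by (intro exI[of _ i] conjI disjI2 exI[of _ "i - 1"]) simp_all
  qed
qed

lemma G1: assumes K: "K > 0" and y: "y \<in> unit_square"
  shows "\<exists>p\<in>FF K. dist y p \<le> sqrt 2 / (2 * real K) \<and> (dist y p < sqrt 2 / (2 * real K) \<or> y \<in> EE K)"
proof -
  obtain u v where uv: "y = (u, v)" "0 \<le> u" "u \<le> 1" "0 \<le> v" "v \<le> 1"
    using y unfolding unit_square_def by auto
  from round1[OF K uv(2,3)] obtain i where i: "0 \<le> i \<and> i \<le> int K \<and> (real K * u - of_int i)^2 \<le> 1/4 \<and>
    ((real K * u - of_int i)^2 < 1/4 \<or> (\<exists>c. 0 \<le> c \<and> c < int K \<and> u = of_int (2 * c + 1) / (2 * real K)))" ..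
  from round1[OF K uv(4,5)] obtain j where j: "0 \<le> j \<and> j \<le> int K \<and> (real K * v - of_int j)^2 \<le> 1/4 \<and>
    ((real K * v - of_int j)^2 < 1/4 \<or> (\<exists>c. 0 \<le> c \<and> c < int K \<and> v = of_int (2 * c + 1) / (2 * real K)))" ..
  let ?X = "(real K * u - of_int i)^2 + (real K * v - of_int j)^2"
  have pF: "gp (real K) i j \<in> FF K" unfolding FF_iff using i j by (intro exI[of _ i] exI[of _ j]) simp
  have d: "dist y (gp (real K) i j) = sqrt ?X / real K" using uv(1) dist_gp_y[of "real K" u v i j] K by simp
  have i3: "(real K * u - of_int i)^2 \<le> 1/4" using i by simp
  have j3: "(real K * v - of_int j)^2 \<le> 1/4" using j by simp
  have le: "?X \<le> 1/2" using i3 j3 by linarith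
  have Kp: "real K > 0" using K by simp
  have dle: "dist y (gp (real K) i j) \<le> sqrt 2 / (2 * real K)"
  proof -
    have "sqrt ?X \<le> sqrt (1/2)" using le by simp
    then have "sqrt ?X / real K \<le> (sqrt 2 / 2) / real K" using Kp sqrt_half by (simp add: divide_right_mono)
    then show ?thesis using d by simp
  qed
  show ?thesis
  proof (cases "?X < 1/2")
    case True
    have "sqrt ?X < sqrt (1/2)" using True by simp
    then have "sqrt ?X / real K < (sqrt 2 / 2) / real K" using Kp sqrt_half by (simp add: divide_strict_right_mono)
    then have "dist y (gp (real K) i j) < sqrt 2 / (2 * real K)" using d by simp
    then show ?thesis using pF dle by (intro bexI[of _ "gp (real K) i j"]) simp_all
  next
    case False
    have "\<not> (real K * u - of_int i)^2 < 1/4" "\<not> (real K * v - of_int j)^2 < 1/4" using False i3 j3 by linarith+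
    then have "\<exists>c. 0 \<le> c \<and> c < int K \<and> u = of_int (2 * c + 1) / (2 * real K)"
      "\<exists>c. 0 \<le> c \<and> c < int K \<and> v = of_int (2 * c + 1) / (2 * real K)" using i j by simp_all
    then obtain c d where cd: "0 \<le> c" "c < int K" "u = of_int (2 * c + 1) / (2 * real K)"
      "0 \<le> d" "d < int K" "v = of_int (2 * d + 1) / (2 * real K)" by metis
    have "y = gp (2 * real K) (2 * c + 1) (2 * d + 1)" using cd uv(1) by (simp add: gp_def)
    then have "y \<in> CC K" unfolding CC_iff using cd by (intro exI[of _ c] exI[of _ d]) simp
    then show ?thesis using pF dle unfolding EE_def by (intro bexI[of _ "gp (real K) i j"]) simp_all
  qed
qed

lemma G0: assumes y: "y \<in> unit_square"
  shows "dist y (1/2, 1/2) \<le> sqrt 2 / 2 \<and> (dist y (1/2, 1/2) < sqrt 2 / 2 \<or> y \<in> EE 1)"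
proof -
  obtain u v where uv: "y = (u, v)" "0 \<le> u" "u \<le> 1" "0 \<le> v" "v \<le> 1"
    using y unfolding unit_square_def by auto
  let ?X = "(u - 1/2)^2 + (v - 1/2)^2"
  have d: "dist y (1/2, 1/2) = sqrt ?X" using uv(1) by (simp add: dist_Pair_Pair dist_real_def)
  have eu: "(u - 1/2)^2 = 1/4 - u * (1 - u)" by (simp add: algebra_simps power2_eq_square)
  have ev: "(v - 1/2)^2 = 1/4 - v * (1 - v)" by (simp add: algebra_simps power2_eq_square)
  have pu: "0 \<le> u * (1 - u)" using uv by simp
  have pv: "0 \<le> v * (1 - v)" using uv by simp
  have le: "?X \<le> 1/2" using eu ev pu pv by linarith
  have dle: "dist y (1/2, 1/2) \<le> sqrt 2 / 2" using d le sqrt_half by simp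
  show ?thesis
  proof (cases "?X < 1/2")
    case True
    then have "dist y (1/2, 1/2) < sqrt 2 / 2" using d sqrt_half by simp
    then show ?thesis using dle by simp
  next
    case False
    then have "u * (1 - u) = 0" "v * (1 - v) = 0" using eu ev pu pv by linarith+
    then have u01: "u = 0 \<or> u = 1" and v01: "v = 0 \<or> v = 1" by auto
    obtain a where a: "0 \<le> a" "a \<le> 1" "u = of_int a" using u01
      by (metis of_int_0 of_int_1 order_refl zero_le_one)
    obtain b where b: "0 \<le> b" "b \<le> 1" "v = of_int b" using v01
      by (metis of_int_0 of_int_1 order_refl zero_le_one)
    have "y = gp (real (1::nat)) a b" using uv(1) a b by (simp add: gp_def)
    then have "y \<in> FF 1" unfolding FF_iff using a b by (intro exI[of _ a] exI[of _ b]) simp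
    then show ?thesis using dle unfolding EE_def by simp
  qed
qed

lemma cell1: assumes K: "K > 0" and u: "0 \<le> u" "u \<le> 1"
  shows "\<exists>i. 0 \<le> i \<and> i \<le> 2 * int K - 1 \<and> 0 \<le> 2 * real K * u - of_int i \<and> 2 * real K * u - of_int i \<le> 1"
proof -
  have Ku: "0 \<le> 2 * real K * u" "2 * real K * u \<le> 2 * real K" using K u by (auto simp: mult_left_le)
  define f where "f = \<lfloor>2 * real K * u\<rfloor>"
  have f1: "of_int f \<le> 2 * real K * u" unfolding f_def by (rule of_int_floor_le)
  have f2: "2 * real K * u < of_int f + 1" unfolding f_def by (rule real_of_int_floor_add_one_gt)
  have f0: "0 \<le> f" unfolding f_def using Ku by simp
  show ?thesis
  proof (cases "f \<le> 2 * int K - 1")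
    case True
    then show ?thesis using f0 f1 f2 by (intro exI[of _ f]) simp
  next
    case False
    then have "2 * int K \<le> f" by simp
    then have "real_of_int (2 * int K) \<le> real_of_int f" by (simp only: of_int_le_iff)
    then have "2 * real K \<le> of_int f" by simp
    then have eq: "2 * real K * u = 2 * real K" using f1 Ku by linarith
    have "real_of_int (2 * int K - 1) = 2 * real K - 1" by simp
    then show ?thesis using eq K by (intro exI[of _ "2 * int K - 1"]) simp
  qed
qed

lemma quad: assumes "0 \<le> (al::real)" "al \<le> 1" "0 \<le> be" "be \<le> 1"
  shows "(al^2 + be^2 \<le> 1 \<or> (al - 1)^2 + (be - 1)^2 \<le> 1) \<and>
    (al^2 + be^2 < 1 \<or> (al - 1)^2 + (be - 1)^2 < 1 \<or> ((al = 0 \<or> al = 1) \<and> (be = 0 \<or> be = 1)))"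
proof -
  have pa: "0 \<le> al * (1 - al)" "0 \<le> be * (1 - be)" using assms by simp_all
  have s: "(al^2 + be^2) + ((al - 1)^2 + (be - 1)^2) = 2 - 2 * (al * (1 - al)) - 2 * (be * (1 - be))"
    by (simp add: algebra_simps power2_eq_square)
  have c1: "al^2 + be^2 \<le> 1 \<or> (al - 1)^2 + (be - 1)^2 \<le> 1" using s pa by linarith
  have c2: "(al = 0 \<or> al = 1) \<and> (be = 0 \<or> be = 1)"
    if "\<not> al^2 + be^2 < 1" "\<not> (al - 1)^2 + (be - 1)^2 < 1"
  proof -
    have "al * (1 - al) = 0" "be * (1 - be) = 0" using s pa that by linarith+
    then show ?thesis by auto
  qed
  show ?thesis using c1 c2 by blast
qed

lemma pick2: assumes p1: "p1 \<in> A" and p2: "p2 \<in> A" and s: "s > 0"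
  and d1: "dist y p1 = sqrt X1 / s" and d2: "dist y p2 = sqrt X2 / s"
  and c1: "X1 \<le> 1 \<or> X2 \<le> 1" and c2: "X1 < 1 \<or> X2 < 1 \<or> y \<in> B"
  shows "\<exists>p\<in>A. dist y p \<le> 1 / s \<and> (dist y p < 1 / s \<or> y \<in> B)"
proof -
  have le: "sqrt X / s \<le> 1 / s" if "X \<le> 1" for X
  proof -
    have "sqrt X \<le> 1" using that by simp
    then show ?thesis using s by (simp add: divide_right_mono)
  qed
  have lt: "sqrt X / s < 1 / s" if "X < 1" for X
  proof -
    have "sqrt X < 1" using that by simp
    then show ?thesis using s by (simp add: divide_strict_right_mono)
  qed
  show ?thesis
  proof (cases "X1 < 1")
    case True
    then show ?thesis using p1 d1 le lt by force
  next
    case F1: False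
    show ?thesis
    proof (cases "X2 < 1")
      case True
      then show ?thesis using p2 d2 le lt by force
    next
      case False
      then have yB: "y \<in> B" using F1 c2 by simp
      show ?thesis
      proof (cases "X1 \<le> 1")
        case True
        then show ?thesis using p1 d1 le yB by force
      next
        case False
        then have "X2 \<le> 1" using c1 by simp
        then show ?thesis using p2 d2 le yB by force
      qed
    qed
  qed
qed

lemma corner1: assumes K: "K > 0" and i: "0 \<le> i" "i \<le> 2 * int K - 1" and al: "al = 2 * real K * u - of_int i"
  and c: "al = 0 \<or> al = 1"
  shows "\<exists>c. 0 \<le> c \<and> c \<le> 2 * int K \<and> u = of_int c / (2 * real K)"
proof -
  have Kp: "2 * real K \<noteq> 0" using K by simp
  show ?thesis
  proof (cases "al = 0")
    case True
    then have "u = of_int i / (2 * real K)" using al Kp by (simp add: field_simps)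
    then show ?thesis using i by (intro exI[of _ i]) simp
  next
    case False
    then have "al = 1" using c by simp
    then have "u = of_int (i + 1) / (2 * real K)" using al Kp by (simp add: field_simps)
    then show ?thesis using i by (intro exI[of _ "i + 1"]) simp
  qed
qed

lemma G2: assumes K: "K > 0" and y: "y \<in> unit_square"
  shows "\<exists>p\<in>EE K. dist y p \<le> 1 / (2 * real K) \<and> (dist y p < 1 / (2 * real K) \<or> y \<in> FF (2 * K))"
proof -
  obtain u v where uv: "y = (u, v)" "0 \<le> u" "u \<le> 1" "0 \<le> v" "v \<le> 1"
    using y unfolding unit_square_def by auto
  from cell1[OF K uv(2,3)] obtain i where i: "0 \<le> i \<and> i \<le> 2 * int K - 1 \<and> 0 \<le> 2 * real K * u - of_int i \<and> 2 * real K * u - of_int i \<le> 1" ..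
  from cell1[OF K uv(4,5)] obtain j where j: "0 \<le> j \<and> j \<le> 2 * int K - 1 \<and> 0 \<le> 2 * real K * v - of_int j \<and> 2 * real K * v - of_int j \<le> 1" ..
  define al where "al = 2 * real K * u - of_int i"
  define be where "be = 2 * real K * v - of_int j"
  have s: "2 * real K > 0" using K by simp
  have ab: "0 \<le> al" "al \<le> 1" "0 \<le> be" "be \<le> 1" using i j unfolding al_def be_def by simp_all
  have i': "0 \<le> i" "i \<le> 2 * int K - 1" using i by simp_all
  have j': "0 \<le> j" "j \<le> 2 * int K - 1" using j by simp_all
  have corner: "y \<in> FF (2 * K)" if "(al = 0 \<or> al = 1) \<and> (be = 0 \<or> be = 1)"
  proof -
    from corner1[OF K i' al_def conjunct1[OF that]] obtain c where
      c: "0 \<le> c \<and> c \<le> 2 * int K \<and> u = of_int c / (2 * real K)" ..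
    from corner1[OF K j' be_def conjunct2[OF that]] obtain d where
      d: "0 \<le> d \<and> d \<le> 2 * int K \<and> v = of_int d / (2 * real K)" ..
    have "y = gp (2 * real K) c d" using uv(1) c d by (simp add: gp_def)
    then show ?thesis unfolding FF2_iff using c d by (intro exI[of _ c] exI[of _ d]) simp
  qed
  have dd: "dist y (gp (2 * real K) a b) = sqrt ((2 * real K * u - of_int a)^2 + (2 * real K * v - of_int b)^2) / (2 * real K)" for a b
    using uv(1) dist_gp_y[OF s] by simp
  show ?thesis
  proof (cases "even (i + j)")
    case True
    have p1: "gp (2 * real K) i j \<in> EE K" unfolding EE_iff[OF K] using i' j' True
      by (intro exI[of _ i] exI[of _ j]) simp
    have p2: "gp (2 * real K) (i+1) (j+1) \<in> EE K" unfolding EE_iff[OF K] using i' j' True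
      by (intro exI[of _ "i+1"] exI[of _ "j+1"]) simp
    have d1: "dist y (gp (2 * real K) i j) = sqrt (al^2 + be^2) / (2 * real K)"
      using dd unfolding al_def be_def by simp
    have d2: "dist y (gp (2 * real K) (i+1) (j+1)) = sqrt ((al - 1)^2 + (be - 1)^2) / (2 * real K)"
      using dd unfolding al_def be_def by (simp add: algebra_simps)
    have q: "(al^2 + be^2 \<le> 1 \<or> (al - 1)^2 + (be - 1)^2 \<le> 1) \<and>
      (al^2 + be^2 < 1 \<or> (al - 1)^2 + (be - 1)^2 < 1 \<or> ((al = 0 \<or> al = 1) \<and> (be = 0 \<or> be = 1)))"
      by (rule quad[OF ab])
    have c2: "al^2 + be^2 < 1 \<or> (al - 1)^2 + (be - 1)^2 < 1 \<or> y \<in> FF (2 * K)"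
    proof -
      from q have h: "al^2 + be^2 < 1 \<or> (al - 1)^2 + (be - 1)^2 < 1 \<or> ((al = 0 \<or> al = 1) \<and> (be = 0 \<or> be = 1))"
        by (rule conjunct2)
      then show ?thesis
      proof (elim disjE)
      qed (use corner in auto)
    qed
    have "\<exists>p\<in>EE K. dist y p \<le> 1 / (2 * real K) \<and> (dist y p < 1 / (2 * real K) \<or> y \<in> FF (2 * K))"
      by (rule pick2[OF p1 p2 s d1 d2 q[THEN conjunct1] c2])
    then show ?thesis .
  next
    case False
    have p1: "gp (2 * real K) (i+1) j \<in> EE K" unfolding EE_iff[OF K] using i' j' False
      by (intro exI[of _ "i+1"] exI[of _ j]) simp
    have p2: "gp (2 * real K) i (j+1) \<in> EE K" unfolding EE_iff[OF K] using i' j' False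
      by (intro exI[of _ i] exI[of _ "j+1"]) simp
    have e1: "(al - 1)^2 = (1 - al)^2" by (simp add: power2_eq_square algebra_simps)
    have e2: "al^2 = ((1 - al) - 1)^2" by (simp add: power2_eq_square algebra_simps)
    have d1': "dist y (gp (2 * real K) (i+1) j) = sqrt ((al - 1)^2 + be^2) / (2 * real K)"
      using dd unfolding al_def be_def by (simp add: algebra_simps)
    have d2': "dist y (gp (2 * real K) i (j+1)) = sqrt (al^2 + (be - 1)^2) / (2 * real K)"
      using dd unfolding al_def be_def by (simp add: algebra_simps)
    have d1: "dist y (gp (2 * real K) (i+1) j) = sqrt ((1 - al)^2 + be^2) / (2 * real K)"
      unfolding e1[symmetric] by (rule d1')
    have d2: "dist y (gp (2 * real K) i (j+1)) = sqrt (((1 - al) - 1)^2 + (be - 1)^2) / (2 * real K)"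
      unfolding e2[symmetric] by (rule d2')
    have ab': "0 \<le> 1 - al" "1 - al \<le> 1" using ab by simp_all
    have q: "((1 - al)^2 + be^2 \<le> 1 \<or> ((1 - al) - 1)^2 + (be - 1)^2 \<le> 1) \<and>
      ((1 - al)^2 + be^2 < 1 \<or> ((1 - al) - 1)^2 + (be - 1)^2 < 1 \<or> ((1 - al = 0 \<or> 1 - al = 1) \<and> (be = 0 \<or> be = 1)))"
      by (rule quad[OF ab' ab(3,4)])
    have c2: "(1 - al)^2 + be^2 < 1 \<or> ((1 - al) - 1)^2 + (be - 1)^2 < 1 \<or> y \<in> FF (2 * K)"
    proof -
      from q have h: "(1 - al)^2 + be^2 < 1 \<or> ((1 - al) - 1)^2 + (be - 1)^2 < 1 \<or> ((1 - al = 0 \<or> 1 - al = 1) \<and> (be = 0 \<or> be = 1))"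
        by (rule conjunct2)
      then show ?thesis
      proof (elim disjE)
        assume "(1 - al = 0 \<or> 1 - al = 1) \<and> (be = 0 \<or> be = 1)"
        then have "(al = 0 \<or> al = 1) \<and> (be = 0 \<or> be = 1)" by auto
        then show ?thesis using corner by simp
      qed simp_all
    qed
    have "\<exists>p\<in>EE K. dist y p \<le> 1 / (2 * real K) \<and> (dist y p < 1 / (2 * real K) \<or> y \<in> FF (2 * K))"
      by (rule pick2[OF p1 p2 s d1 d2 q[THEN conjunct1] c2])
    then show ?thesis .
  qed
qed

lemma c0_EE1: "(1/2, 1/2) \<in> EE 1"
proof -
  have "gp (2 * real (1::nat)) (2 * 0 + 1) (2 * 0 + 1) \<in> CC 1" unfolding CC_iff
    by (intro exI[of _ 0]) simp
  moreover have "gp (2 * real (1::nat)) (2 * 0 + 1) (2 * 0 + 1) = (1/2, 1/2)" by (simp add: gp_def)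
  ultimately show ?thesis unfolding EE_def by simp
qed

lemma card_EE_pow: "card (EE (2^m)) = n_seq m"
proof -
  have "(2::nat)^m * 2^m = 4^m" by (simp add: power_mult_distrib[symmetric])
  then show ?thesis using card_EE[of "2^m"] by (simp add: n_seq_def power2_eq_square)
qed

lemma card_FF_pow: "card (FF (2 * 2^m)) = k_seq m"
  using card_FF[of "2 * 2^m"] by (simp add: k_seq_def)

lemma lev_base:
  assumes x1: "x 1 = (1/2, 1/2)" and g: "greedy_packing unit_square x"
  shows "x ` {1..n_seq 0} = EE 1"
proof -
  have r: "sqrt 2 / 2 > (0::real)" by simp
  have A: "{(1/2, 1/2)} \<subseteq> EE 1" using c0_EE1 by simp
  have cov: "\<exists>p\<in>{(1/2, 1/2)}. dist y p \<le> sqrt 2 / 2 \<and> (dist y p < sqrt 2 / 2 \<or> y \<in> EE 1)"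
    if "y \<in> unit_square" for y using G0[OF that] by simp
  have sep: "sqrt 2 / 2 \<le> dist p q" if "p \<in> EE 1 - {(1/2, 1/2)}" "q \<in> EE 1" "q \<noteq> p" for p q
    using P2[of 1 p q] that by simp
  have X0: "x ` {1..card {(1/2::real, 1/2::real)}} = {(1/2, 1/2)}" using x1 by simp
  have "x ` {1..card (EE 1)} = EE 1"
    by (rule step_full[OF g finite_EE A EE_sub r cov sep X0]) simp_all
  moreover have "card (EE 1) = n_seq 0" using card_EE_pow[of 0] by simp
  ultimately show ?thesis by simp
qed

lemma lev_A:
  assumes g: "greedy_packing unit_square x" and X: "x ` {1..n_seq m} = EE (2^m)"
  shows "n_seq m \<le> n \<Longrightarrow> n \<le> k_seq m \<Longrightarrow>
    EE (2^m) \<subseteq> x ` {1..n} \<and> x ` {1..n} \<subseteq> FF (2 * 2^m) \<and> card (x ` {1..n}) = n"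
proof -
  let ?K = "(2::nat)^m"
  have K: "?K > 0" by simp
  have r: "1 / (2 * real ?K) > 0" by simp
  have cov: "\<exists>p\<in>EE ?K. dist y p \<le> 1 / (2 * real ?K) \<and> (dist y p < 1 / (2 * real ?K) \<or> y \<in> FF (2 * ?K))"
    if "y \<in> unit_square" for y using G2[OF K that] .
  have sep: "1 / (2 * real ?K) \<le> dist p q" if "p \<in> FF (2 * ?K) - EE ?K" "q \<in> FF (2 * ?K)" "q \<noteq> p" for p q
    using P1[of "2 * ?K" p q] that by simp
  have n0: "n_seq m \<ge> 1" unfolding n_seq_def by (simp add: Suc_le_eq)
  assume a: "n_seq m \<le> n" "n \<le> k_seq m"
  show ?thesis
    using step_lemma[OF g finite_FF EE_FF2[OF K] FF_sub r cov sep X card_EE_pow n0 a(1)] a(2) card_FF_pow[of m]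
    by simp
qed

lemma lev_B:
  assumes g: "greedy_packing unit_square x" and X: "x ` {1..k_seq m} = FF (2 * 2^m)"
  shows "k_seq m \<le> n \<Longrightarrow> n \<le> n_seq (Suc m) \<Longrightarrow>
    FF (2 * 2^m) \<subseteq> x ` {1..n} \<and> x ` {1..n} \<subseteq> EE (2 * 2^m) \<and> card (x ` {1..n}) = n"
proof -
  let ?K = "(2::nat) * 2^m"
  have K: "?K > 0" by simp
  have r: "sqrt 2 / (2 * real ?K) > 0" by simp
  have cov: "\<exists>p\<in>FF ?K. dist y p \<le> sqrt 2 / (2 * real ?K) \<and> (dist y p < sqrt 2 / (2 * real ?K) \<or> y \<in> EE ?K)"
    if "y \<in> unit_square" for y using G1[OF K that] .
  have sep: "sqrt 2 / (2 * real ?K) \<le> dist p q" if "p \<in> EE ?K - FF ?K" "q \<in> EE ?K" "q \<noteq> p" for p q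
    using P2[OF K, of p q] that by simp
  have n0: "k_seq m \<ge> 1" by (simp add: k_seq_def)
  have cE: "card (EE ?K) = n_seq (Suc m)" using card_EE_pow[of "Suc m"] by simp
  assume a: "k_seq m \<le> n" "n \<le> n_seq (Suc m)"
  show ?thesis
    using step_lemma[OF g finite_EE FF_EE EE_sub[OF K] r cov sep X card_FF_pow n0 a(1)] a(2) cE
    by simp
qed

lemma level:
  assumes x1: "x 1 = (1/2, 1/2)" and g: "greedy_packing unit_square x"
  shows "x ` {1..n_seq m} = EE (2^m)"
proof (induction m)
  case 0
  then show ?case using lev_base[OF x1 g] by simp
next
  case (Suc m)
  have k: "n_seq m \<le> k_seq m" using card_EE_pow[of m] card_FF_pow[of m] card_mono[OF finite_FF EE_FF2[of "2^m"]]
    by simp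
  have "x ` {1..k_seq m} \<subseteq> FF (2 * 2^m)" "card (x ` {1..k_seq m}) = k_seq m"
    using lev_A[OF g Suc.IH k order_refl] by simp_all
  then have XF: "x ` {1..k_seq m} = FF (2 * 2^m)"
    using card_FF_pow[of m] by (simp add: card_subset_eq finite_FF)
  have k2: "k_seq m \<le> n_seq (Suc m)" using card_EE_pow[of "Suc m"] card_FF_pow[of m] card_mono[OF finite_EE FF_EE[of "2 * 2^m"]]
    by simp
  have "x ` {1..n_seq (Suc m)} \<subseteq> EE (2 * 2^m)" "card (x ` {1..n_seq (Suc m)}) = n_seq (Suc m)"
    using lev_B[OF g XF k2 order_refl] by simp_all
  then show ?case using card_EE_pow[of "Suc m"] by (simp add: card_subset_eq finite_EE)
qed

lemma SR_A: assumes K: "K > 0" and X1: "EE K \<subseteq> X" and X2: "X \<subseteq> FF (2 * K)" and X3: "X \<noteq> EE K"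
  shows "SR X = 1 / (4 * real K)"
proof -
  have fX: "finite X" using X2 finite_FF finite_subset by auto
  obtain p where p: "p \<in> X" "p \<notin> EE K" using X1 X3 by auto
  have pF: "p \<in> FF (2 * K)" using p X2 by auto
  obtain q where q: "q \<in> EE K" "dist p q = 1 / (2 * real K)" using W2[OF K pF p(2)] by auto
  have pq: "p \<noteq> q" using p q by auto
  have sep: "1 / (2 * real K) \<le> dist a b" if "a \<in> X" "b \<in> X" "a \<noteq> b" for a b
    using P1[of "2 * K" a b] that X2 K by auto
  have "SR X = (1 / (2 * real K)) / 2"
    by (rule SR_eq[OF fX sep p(1) _ pq q(2)]) (use q X1 in auto)
  then show ?thesis by simp
qed

lemma SR_B: assumes K: "K > 0" and X1: "FF K \<subseteq> X" and X2: "X \<subseteq> EE K" and X3: "X \<noteq> FF K"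
  shows "SR X = sqrt 2 / (4 * real K)"
proof -
  have fX: "finite X" using X2 finite_EE finite_subset by auto
  obtain p where p: "p \<in> X" "p \<notin> FF K" using X1 X3 by auto
  have pC: "p \<in> CC K" using p X2 unfolding EE_def by auto
  obtain q where q: "q \<in> FF K" "dist p q = sqrt 2 / (2 * real K)" using W1[OF K pC] by auto
  have pq: "p \<noteq> q" using p q by auto
  have sep: "sqrt 2 / (2 * real K) \<le> dist a b" if "a \<in> X" "b \<in> X" "a \<noteq> b" for a b
    using P2[OF K, of a b] that X2 by auto
  have "SR X = (sqrt 2 / (2 * real K)) / 2"
    by (rule SR_eq[OF fX sep p(1) _ pq q(2)]) (use q X1 in auto)
  then show ?thesis by simp
qed

lemma CR_A: assumes K: "K > 0" and X1: "EE K \<subseteq> X" and X2: "X \<subseteq> FF (2 * K)" and X3: "X \<noteq> FF (2 * K)"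
  shows "CR unit_square X = 1 / (2 * real K)"
proof (rule CR_eq[OF finite_FF X1 X2 _ X3])
  show "FF (2 * K) \<subseteq> unit_square" using FF_sub K by simp
  show "EE K \<noteq> {}" using c0_EE1 FF_EE[of K] K
    by (metis FF_iff empty_iff int_ops(1) of_nat_0_le_iff subset_iff)
  show "\<exists>p\<in>EE K. dist y p \<le> 1 / (2 * real K)" if "y \<in> unit_square" for y
    using G2[OF K that] by auto
  show "1 / (2 * real K) \<le> dist p q" if "p \<in> FF (2 * K) - EE K" "q \<in> FF (2 * K)" "q \<noteq> p" for p q
    using P1[of "2 * K" p q] that K by auto
qed

lemma CR_B: assumes K: "K > 0" and X1: "FF K \<subseteq> X" and X2: "X \<subseteq> EE K" and X3: "X \<noteq> EE K"
  shows "CR unit_square X = sqrt 2 / (2 * real K)"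
proof (rule CR_eq[OF finite_EE X1 X2 _ X3])
  show "EE K \<subseteq> unit_square" using EE_sub K by simp
  have "gp (real K) 0 0 \<in> FF K" unfolding FF_iff by (intro exI[of _ 0]) simp
  then show "FF K \<noteq> {}" by auto
  show "\<exists>p\<in>FF K. dist y p \<le> sqrt 2 / (2 * real K)" if "y \<in> unit_square" for y
    using G1[OF K that] by auto
  show "sqrt 2 / (2 * real K) \<le> dist p q" if "p \<in> EE K - FF K" "q \<in> EE K" "q \<noteq> p" for p q
    using P2[OF K, of p q] that by auto
qed

lemma n_seq_ge: "m \<le> n_seq m"
proof -
  have "m < 2^m" by (rule less_exp)
  also have "(2::nat)^m \<le> (2^m + 1)^2" by (simp add: power2_eq_square)
  finally show ?thesis unfolding n_seq_def by simp
qed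

lemma m_exists: assumes n: "n \<ge> 5" shows "\<exists>m. n_seq m \<le> n \<and> n < n_seq (Suc m)"
proof -
  define S where "S = {m. n_seq m \<le> n}"
  have fS: "finite S" unfolding S_def using n_seq_ge
    by (metis (no_types, lifting) finite_nat_set_iff_bounded_le le_trans mem_Collect_eq)
  have "0 \<in> S" unfolding S_def n_seq_def using n by (simp add: power2_eq_square)
  then have ne: "S \<noteq> {}" by auto
  define M where "M = Max S"
  have "M \<in> S" unfolding M_def using fS ne by (rule Max_in)
  moreover have "Suc M \<notin> S" using Max_ge[OF fS, of "Suc M"] unfolding M_def by auto
  ultimately show ?thesis unfolding S_def by auto
qed

lemma m_floor: assumes a: "n_seq m \<le> n" "n < n_seq (Suc m)"
  shows "nat \<lfloor>log 2 (sqrt (real n / 2 - 1/4) - 1/2)\<rfloor> = m"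
proof -
  define t where "t = (2::real)^m"
  have t1: "t \<ge> 1" unfolding t_def by simp
  have four: "(4::real)^m = t^2" unfolding t_def by (simp add: power_mult_distrib[symmetric] power2_eq_square)
  have r1: "real (n_seq m) = (t+1)^2 + t^2" unfolding n_seq_def t_def using four t_def by simp
  have r2: "real (n_seq (Suc m)) = (2*t+1)^2 + 4*t^2" unfolding n_seq_def t_def using four t_def by simp
  have a1: "(t+1)^2 + t^2 \<le> real n" using a(1) r1 by (metis of_nat_le_iff)
  have a2: "real n < (2*t+1)^2 + 4*t^2" using a(2) r2 by (metis of_nat_less_iff)
  define z where "z = sqrt (real n / 2 - 1/4) - 1/2"
  have "(t + 1/2)^2 \<le> real n / 2 - 1/4" using a1 by (simp add: power2_eq_square algebra_simps)
  then have "t + 1/2 \<le> sqrt (real n / 2 - 1/4)" by (rule real_le_rsqrt)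
  then have z1: "t \<le> z" unfolding z_def by simp
  have "real n / 2 - 1/4 < (2*t + 1/2)^2" using a2 by (simp add: power2_eq_square algebra_simps)
  then have "sqrt (real n / 2 - 1/4) < 2*t + 1/2" using t1 by (intro real_less_lsqrt) simp_all
  then have z2: "z < 2*t" unfolding z_def by simp
  have zp: "z > 0" using z1 t1 by simp
  have p1: "2 powr real_of_int (int m) = t" unfolding t_def by (simp add: powr_realpow)
  have p2: "2 powr real_of_int (int m + 1) = 2*t" unfolding t_def
    by (simp add: powr_realpow[symmetric] powr_add)
  have "\<lfloor>log 2 z\<rfloor> = int m"
    using floor_log_eq_powr_iff[OF zp, of 2 "int m"] p1 p2 z1 z2 by simp
  then show ?thesis unfolding z_def by simp
qed

lemma arith1: "(t::real) > 0 \<Longrightarrow> (1 / (2 * t)) / (sqrt 2 / (4 * t)) = sqrt 2"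
  by (simp add: field_simps)

lemma arith2: "(t::real) > 0 \<Longrightarrow> (sqrt 2 / (4 * t)) / (1 / (4 * t)) = sqrt 2"
  by (simp add: field_simps)

lemma arith3: "(t::real) > 0 \<Longrightarrow> (sqrt 2 / (4 * t)) / (sqrt 2 / (8 * t)) = 2"
  by (simp add: field_simps)

lemma arith4: "(t::real) > 0 \<Longrightarrow> (1 / (2 * t)) / (1 / (4 * t)) = 2"
  by (simp add: field_simps)

theorem theorem3:
  fixes x :: "nat \<Rightarrow> real \<times> real" and n :: nat
  assumes "x 1 = (1/2, 1/2)"
    and "greedy_packing unit_square x"
    and "n \<ge> 5"
  defines "m \<equiv> nat \<lfloor>log 2 (sqrt (real n / 2 - 1/4) - 1/2)\<rfloor>"
  defines "\<gamma> \<equiv> (1::real) / 2 ^ m"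
  defines "X \<equiv> x ` {1..n}"
  shows "(n = n_seq m \<longrightarrow>
            SR X = \<gamma> * sqrt 2 / 4 \<and> CR unit_square X = \<gamma> / 2 \<and> MR unit_square X = sqrt 2)
       \<and> (n_seq m < n \<and> n < k_seq m \<longrightarrow>
            SR X = \<gamma> / 4 \<and> CR unit_square X = \<gamma> / 2 \<and> MR unit_square X = 2)
       \<and> (n = k_seq m \<longrightarrow>
            SR X = \<gamma> / 4 \<and> CR unit_square X = \<gamma> * sqrt 2 / 4 \<and> MR unit_square X = sqrt 2)
       \<and> (k_seq m < n \<and> n < n_seq (m + 1) \<longrightarrow>
            SR X = \<gamma> * sqrt 2 / 8 \<and> CR unit_square X = \<gamma> * sqrt 2 / 4 \<and> MR unit_square X = 2)"
proof -
  note x1 = assms(1) and g = assms(2)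
  obtain m' where m': "n_seq m' \<le> n" "n < n_seq (Suc m')" using m_exists[OF assms(3)] by blast
  have mm: "m = m'" unfolding m_def using m_floor[OF m'] .
  define K where "K = (2::nat)^m"
  have K: "K > 0" unfolding K_def by simp
  have K2: "2 * K > 0" using K by simp
  have rK: "real K = 2^m" unfolding K_def by simp
  have ga: "\<gamma> = 1 / real K" unfolding \<gamma>_def rK ..
  have tK: "real K > 0" using K by simp
  have cE: "card (EE K) = n_seq m" unfolding K_def by (rule card_EE_pow)
  have cF: "card (FF (2 * K)) = k_seq m" unfolding K_def by (rule card_FF_pow)
  have cE2: "card (EE (2 * K)) = n_seq (Suc m)" using card_EE_pow[of "Suc m"] unfolding K_def by simp
  have cFK: "card (FF K) = (K+1)^2" using card_FF[OF K] .
  have lt1: "n_seq m < k_seq m"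
  proof -
    have "(K+1)^2 + K^2 < (2*K+1)^2" using K by (simp add: power2_eq_square algebra_simps)
    then show ?thesis using cE cF card_EE[OF K] card_FF[OF K2] by simp
  qed
  have lt2: "k_seq m < n_seq (Suc m)"
  proof -
    have a: "0 < 4 * K^2" using K by simp
    have b: "k_seq m + 4 * K^2 = n_seq (Suc m)" using cF cE2 card_EE[OF K2] card_FF[OF K2] by simp
    show ?thesis using a b by linarith
  qed
  have ltF: "card (FF K) < card (EE K)" using cFK card_EE[OF K] K by simp
  have XE: "x ` {1..n_seq m} = EE K" unfolding K_def by (rule level[OF x1 g])
  have XF: "x ` {1..k_seq m} = FF (2 * K)"
  proof -
    have "x ` {1..k_seq m} \<subseteq> FF (2 * K)" "card (x ` {1..k_seq m}) = k_seq m"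
      using lev_A[OF g XE[unfolded K_def], of "k_seq m"] lt1 unfolding K_def by simp_all
    then show ?thesis using cF by (simp add: card_subset_eq finite_FF)
  qed
  have rng: "n_seq m \<le> n" "n < n_seq (Suc m)" using m' mm by simp_all
  have c1: "SR X = \<gamma> * sqrt 2 / 4 \<and> CR unit_square X = \<gamma> / 2 \<and> MR unit_square X = sqrt 2"
    if h: "n = n_seq m"
  proof -
    have X: "X = EE K" unfolding X_def h using XE .
    have "EE K \<noteq> FF K" using ltF by auto
    then have s: "SR X = sqrt 2 / (4 * real K)" using SR_B[OF K FF_EE order_refl] X by simp
    have "EE K \<noteq> FF (2 * K)" using cE cF lt1 by auto
    then have c: "CR unit_square X = 1 / (2 * real K)" using CR_A[OF K order_refl EE_FF2[OF K]] X by simp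
    show ?thesis using s c arith1[OF tK] unfolding MR_def ga by simp
  qed
  have c2: "SR X = \<gamma> / 4 \<and> CR unit_square X = \<gamma> / 2 \<and> MR unit_square X = 2"
    if h: "n_seq m < n" "n < k_seq m"
  proof -
    have i: "EE K \<subseteq> X" "X \<subseteq> FF (2 * K)" "card X = n"
      using lev_A[OF g XE[unfolded K_def], of n] h unfolding X_def K_def by simp_all
    have "X \<noteq> EE K" using i cE h by auto
    then have s: "SR X = 1 / (4 * real K)" using SR_A[OF K i(1,2)] by simp
    have "X \<noteq> FF (2 * K)" using i cF h by auto
    then have c: "CR unit_square X = 1 / (2 * real K)" using CR_A[OF K i(1,2)] by simp
    show ?thesis using s c arith4[OF tK] unfolding MR_def ga by simp
  qed
  have c3: "SR X = \<gamma> / 4 \<and> CR unit_square X = \<gamma> * sqrt 2 / 4 \<and> MR unit_square X = sqrt 2"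
    if h: "n = k_seq m"
  proof -
    have X: "X = FF (2 * K)" unfolding X_def h using XF .
    have "X \<noteq> EE K" using X cE cF lt1 by auto
    then have s: "SR X = 1 / (4 * real K)" using SR_A[OF K EE_FF2[OF K]] X by simp
    have "X \<noteq> EE (2 * K)" using X cF cE2 lt2 by auto
    then have c: "CR unit_square X = sqrt 2 / (2 * real (2 * K))" using CR_B[OF K2 _ FF_EE] X by simp
    then have c': "CR unit_square X = sqrt 2 / (4 * real K)" by simp
    show ?thesis using s c' arith2[OF tK] unfolding MR_def ga by simp
  qed
  have c4: "SR X = \<gamma> * sqrt 2 / 8 \<and> CR unit_square X = \<gamma> * sqrt 2 / 4 \<and> MR unit_square X = 2"
    if h: "k_seq m < n" "n < n_seq (m + 1)"
  proof -
    have i: "FF (2 * K) \<subseteq> X" "X \<subseteq> EE (2 * K)" "card X = n"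
      using lev_B[OF g XF[unfolded K_def], of n] h unfolding X_def K_def by simp_all
    have "X \<noteq> FF (2 * K)" using i cF h by auto
    then have s: "SR X = sqrt 2 / (4 * real (2 * K))" using SR_B[OF K2 i(1,2)] by simp
    then have s': "SR X = sqrt 2 / (8 * real K)" by simp
    have "X \<noteq> EE (2 * K)" using i cE2 h by auto
    then have c: "CR unit_square X = sqrt 2 / (2 * real (2 * K))" using CR_B[OF K2 i(1,2)] by simp
    then have c': "CR unit_square X = sqrt 2 / (4 * real K)" by simp
    show ?thesis using s' c' arith3[OF tK] unfolding MR_def ga by simp
  qed
  show ?thesis using c1 c2 c3 c4 by blast
qed

end
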